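(* Let $\alpha\in(1,\infty)\setminus\mathbb{N}$ and let $M_{0,\alpha}(X^n,P)=\sum_{x\in\mathcal{X}}p_x^{\alpha}I(F_x(X^n)=0)$. Then $$\sup_P E\big[(M_{0,\alpha}(X^n,P))^2\big]\le_n O\big(1/n^{2(\alpha-1)}\big),$$ the supremum being over all discrete distributions $P$.
   Context: $P$ is a discrete probability distribution on a countable alphabet $\mathcal{X}$, $p_x=P(x)$, and $X^n=(X_1,\ldots,X_n)$ are i.i.d. samples from $P$. $F_x(X^n)=\sum_{i=1}^n I(X_i=x)$ is the number of occurrences of $x$ in $X^n$, and $I(\cdot)$ is the indicator. For nonnegative sequences, $a_n\le_n b_n$ means $a_n\le b_n+o(b_n)$ as $n\to\infty$. *)

theory Defs
  imports "HOL-Probability.Probability"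
begin

definition iid_samples :: "nat \<Rightarrow> 'a pmf \<Rightarrow> (nat \<Rightarrow> 'a) pmf" where
  "iid_samples n P = Pi_pmf {..<n} undefined (\<lambda>_. P)"

definition occ :: "nat \<Rightarrow> (nat \<Rightarrow> 'a) \<Rightarrow> 'a \<Rightarrow> nat" where
  "occ n xs x = card {i \<in> {..<n}. xs i = x}"

definition M0 :: "real \<Rightarrow> nat \<Rightarrow> 'a pmf \<Rightarrow> (nat \<Rightarrow> 'a) \<Rightarrow> real" where
  "M0 \<alpha> n P xs = (\<Sum>\<^sub>\<infinity>x\<in>UNIV. pmf P x powr \<alpha> * (if occ n xs x = 0 then 1 else 0))"

end

theory Submission
  imports Defs
begin


lemma key1:
  fixes t g :: real assumes "t \<ge> 0" "g > 0"
  shows "t powr g \<le> g powr g * exp t"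
proof -
  have "t / g \<le> exp (t / g)" using exp_ge_add_one_self[of "t/g"] by linarith
  hence "(t / g) powr g \<le> exp (t / g) powr g"
    using assms by (intro powr_mono2) auto
  also have "\<dots> = exp t" using assms by (simp add: powr_def)
  finally have "t powr g / g powr g \<le> exp t" using assms by (simp add: powr_divide)
  thus ?thesis using assms by (simp add: field_simps)
qed

lemma key2:
  fixes p g :: real and n :: nat assumes "0 \<le> p" "p \<le> 1" "g > 0" "n > 0"
  shows "p powr g * (1 - p) ^ n \<le> g powr g / real n powr g"
proof -
  have "(1 - p) ^ n \<le> exp (- p) ^ n"
    using assms by (intro power_mono) (auto simp: exp_ge_add_one_self[of "-p", simplified] )
  also have "\<dots> = exp (- (real n * p))" by (simp add: exp_of_nat_mult[symmetric])
  finally have e: "(1 - p) ^ n \<le> exp (- (real n * p))" .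
  have "p powr g = (real n * p) powr g / real n powr g"
    using assms by (simp add: powr_mult)
  also have "\<dots> \<le> g powr g * exp (real n * p) / real n powr g"
    using assms by (intro divide_right_mono key1) auto
  finally have a: "p powr g \<le> g powr g * exp (real n * p) / real n powr g" .
  have "p powr g * (1 - p) ^ n \<le> (g powr g * exp (real n * p) / real n powr g) * exp (- (real n * p))"
    using a e assms by (intro mult_mono) auto
  also have "\<dots> = g powr g / real n powr g" by (simp add: exp_minus field_simps)
  finally show ?thesis .
qed



lemma pmf_summable_on: "pmf P summable_on A"
proof -
  have "Infinite_Sum.abs_summable_on (pmf P) A"
    using abs_summable_equivalent pmf_abs_summable by blast
  thus ?thesis by (rule abs_summable_summable)
qed

lemma pmf_infsum_1: "(\<Sum>\<^sub>\<infinity>x\<in>UNIV. pmf P x) = 1"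
  by (metis infsetsum_infsum[OF pmf_abs_summable] infsetsum_pmf_eq_1[of P UNIV] subset_UNIV)

lemma summ_bound:
  fixes f :: "'a \<Rightarrow> real"
  assumes "\<And>x. 0 \<le> f x" "\<And>x. f x \<le> c * pmf P x"
  shows "f summable_on UNIV"
proof (rule summable_on_comparison_test[where f = "\<lambda>x. c * pmf P x"])
  show "(\<lambda>x. c * pmf P x) summable_on UNIV" by (intro summable_on_cmult_right pmf_summable_on)
  show "f x \<le> c * pmf P x" if "x \<in> UNIV" for x using assms[of x] by simp
  show "0 \<le> f x" if "x \<in> UNIV" for x using assms[of x] by simp
qed

lemma powr_le_self:
  fixes p a :: real assumes "0 \<le> p" "p \<le> 1" "a \<ge> 1"
  shows "p powr a \<le> p"
  using assms powr_le_one_le[of p a] by (cases "p = 0") auto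

lemma powr_split:
  fixes p a :: real assumes "0 \<le> p" "a > 0"
  shows "p powr (a + 1) = p * p powr a"
  using assms by (cases "p = 0") (auto simp: powr_add)

lemma pointwise:
  fixes P :: "'a pmf" and I :: "'a \<Rightarrow> real" and \<alpha> :: real
  assumes I: "\<And>x. 0 \<le> I x" "\<And>x. I x \<le> 1" and a: "\<alpha> > 1"
  shows "(\<Sum>\<^sub>\<infinity>x\<in>UNIV. pmf P x powr \<alpha> * I x)\<^sup>2 \<le> (\<Sum>\<^sub>\<infinity>x\<in>UNIV. pmf P x powr (2*\<alpha>-1) * I x)"
proof -
  define p where "p = pmf P"
  define w where "w x = p x * I x" for x
  define b where "b x = p x powr (\<alpha> - 1)" for x
  have p01: "0 \<le> p x" "p x \<le> 1" for x unfolding p_def by (auto simp: pmf_le_1)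
  have w0: "0 \<le> w x" "w x \<le> p x" for x unfolding w_def using p01[of x] I[of x]
    by (auto simp: mult_left_le)
  have b01: "0 \<le> b x" "b x \<le> 1" for x unfolding b_def using p01[of x] a
    by (auto simp: powr_le1)
  have f_eq: "p x powr \<alpha> * I x = w x * b x" for x
    using powr_split[OF p01(1)[of x], of "\<alpha> - 1"] a unfolding w_def b_def by simp
  have g_eq: "p x powr (2*\<alpha>-1) * I x = w x * (b x)\<^sup>2" for x
  proof -
    have "(b x)\<^sup>2 = p x powr (2*\<alpha>-2)" unfolding b_def using p01[of x]
      by (simp add: powr_mult_base power2_eq_square powr_add[symmetric])
    moreover have "p x powr (2*\<alpha>-1) = p x * p x powr (2*\<alpha>-2)"
      using powr_split[OF p01(1)[of x], of "2*\<alpha>-2"] a by simp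
    ultimately show ?thesis unfolding w_def by simp
  qed
  define m where "m = (\<Sum>\<^sub>\<infinity>x\<in>UNIV. w x * b x)"
  define G where "G = (\<Sum>\<^sub>\<infinity>x\<in>UNIV. w x * (b x)\<^sup>2)"
  have sw: "w summable_on UNIV"
    by (rule summ_bound[where c=1 and P=P]) (use w0 in \<open>auto simp: p_def\<close>)
  have swb: "(\<lambda>x. w x * b x) summable_on UNIV"
    by (rule summ_bound[where c=1 and P=P])
       (use w0 b01 in \<open>auto simp: p_def intro: mult_nonneg_nonneg order_trans[OF mult_right_le_one_le]\<close>)
  have swb2: "(\<lambda>x. w x * (b x)\<^sup>2) summable_on UNIV"
  proof (rule summ_bound[where c=1 and P=P])
    fix x
    have "(b x)\<^sup>2 \<le> 1" using b01[of x] by (simp add: power_le_one)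
    thus "0 \<le> w x * (b x)\<^sup>2" "w x * (b x)\<^sup>2 \<le> 1 * pmf P x"
      using w0[of x] unfolding p_def by (auto intro: order_trans[OF mult_right_le_one_le])
  qed
  have m0: "m \<ge> 0" unfolding m_def by (intro infsum_nonneg) (use w0 b01 in auto)
  have W1: "(\<Sum>\<^sub>\<infinity>x\<in>UNIV. w x) \<le> 1"
  proof -
    have "(\<Sum>\<^sub>\<infinity>x\<in>UNIV. w x) \<le> (\<Sum>\<^sub>\<infinity>x\<in>UNIV. p x)"
      by (intro infsum_mono sw) (use w0 in \<open>auto simp: p_def pmf_summable_on\<close>)
    thus ?thesis using pmf_infsum_1[of P] by (simp add: p_def)
  qed
  have "m * m = (\<Sum>\<^sub>\<infinity>x\<in>UNIV. w x * b x * m)"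
    unfolding m_def by (rule infsum_cmult_left'[symmetric])
  also have "\<dots> \<le> (\<Sum>\<^sub>\<infinity>x\<in>UNIV. (1/2) * (w x * (b x)\<^sup>2) + (m * m / 2) * w x)"
  proof (rule infsum_mono)
    show "(\<lambda>x. w x * b x * m) summable_on UNIV" by (intro summable_on_cmult_left swb)
    show "(\<lambda>x. (1/2) * (w x * (b x)\<^sup>2) + (m * m / 2) * w x) summable_on UNIV"
      by (intro summable_on_add summable_on_cmult_right swb2 sw)
    fix x
    have "b x * m \<le> ((b x)\<^sup>2 + m * m) / 2"
      using sum_squares_ge_zero[of "b x - m" 0] by (simp add: power2_eq_square algebra_simps)
    hence "w x * (b x * m) \<le> w x * (((b x)\<^sup>2 + m * m) / 2)"
      using w0[of x] by (intro mult_left_mono) auto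
    thus "w x * b x * m \<le> (1/2) * (w x * (b x)\<^sup>2) + (m * m / 2) * w x"
      by (simp add: algebra_simps add_divide_distrib)
  qed
  also have "\<dots> = G / 2 + (m * m / 2) * (\<Sum>\<^sub>\<infinity>x\<in>UNIV. w x)"
  proof -
    have s1: "(\<lambda>x. (1/2) * (w x * (b x)\<^sup>2)) summable_on UNIV"
      by (intro summable_on_cmult_right swb2)
    have s2: "(\<lambda>x. (m * m / 2) * w x) summable_on UNIV"
      by (intro summable_on_cmult_right sw)
    show ?thesis
      unfolding infsum_add[OF s1 s2] infsum_cmult_right'[of "1/2"] infsum_cmult_right'[of "m*m/2"] G_def
      by simp
  qed
  also have "\<dots> \<le> G / 2 + (m * m / 2)"
    using W1 m0 by (intro add_left_mono) (simp add: mult_left_le)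
  finally have "m * m \<le> G" by simp
  thus ?thesis unfolding m_def G_def p_def using f_eq g_eq
    by (simp add: power2_eq_square p_def)
qed


lemma occ0_set: "{xs. occ n xs x = 0} = Pi {..<n} (\<lambda>_. UNIV - {x})"
  by (auto simp: occ_def)

lemma prob_occ0:
  "measure_pmf.prob (iid_samples n P) {xs. occ n xs x = 0} = (1 - pmf P x) ^ n"
proof -
  have "measure_pmf.prob P (UNIV - {x}) = 1 - pmf P x"
    using measure_pmf.prob_compl[of "{x}" P] by (simp add: measure_pmf_single)
  thus ?thesis unfolding occ0_set iid_samples_def
    by (subst measure_Pi_pmf_Pi) auto
qed

lemma inner_int:
  "(\<integral>\<^sup>+ xs. ennreal (pmf P x powr b * (if occ n xs x = 0 then 1 else 0)) \<partial>measure_pmf (iid_samples n P))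
     = ennreal (pmf P x powr b * (1 - pmf P x) ^ n)"
proof -
  have "(\<integral>\<^sup>+ xs. ennreal (pmf P x powr b * (if occ n xs x = 0 then 1 else 0)) \<partial>measure_pmf (iid_samples n P))
      = (\<integral>\<^sup>+ xs. ennreal (pmf P x powr b) * indicator {xs. occ n xs x = 0} xs \<partial>measure_pmf (iid_samples n P))"
    by (intro nn_integral_cong) (auto simp: indicator_def)
  also have "\<dots> = ennreal (pmf P x powr b) * emeasure (measure_pmf (iid_samples n P)) {xs. occ n xs x = 0}"
    by (rule nn_integral_cmult_indicator) simp
  also have "\<dots> = ennreal (pmf P x powr b * (1 - pmf P x) ^ n)"
    by (simp add: measure_pmf.emeasure_eq_measure prob_occ0 ennreal_mult pmf_le_1)
  finally show ?thesis .
qed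

theorem lemma3:
  fixes \<alpha> :: real
  assumes "\<alpha> > 1" and "\<alpha> \<notin> \<nat>"
  shows "\<exists>C N. \<forall>n \<ge> N. \<forall>P :: 'a :: countable pmf.
           measure_pmf.expectation (iid_samples n P) (\<lambda>xs. (M0 \<alpha> n P xs)\<^sup>2)
             \<le> C / real n powr (2 * (\<alpha> - 1))"
proof (intro exI allI impI)
  define \<gamma> where "\<gamma> = 2 * (\<alpha> - 1)"
  have g0: "\<gamma> > 0" using assms unfolding \<gamma>_def by simp
  fix n :: nat and P :: "'a pmf"
  assume n1: "n \<ge> 1"
  define K where "K = \<gamma> powr \<gamma> / real n powr \<gamma>"
  have K0: "K \<ge> 0" unfolding K_def by simp
  define S where "S = measure_pmf (iid_samples n P)"
  define C where "C = (count_space UNIV :: 'a measure)"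
  define g where "g xs x = pmf P x powr (2*\<alpha>-1) * (if occ n xs x = 0 then 1 else (0::real))" for xs x
  define G where "G xs = (\<Sum>\<^sub>\<infinity>x\<in>UNIV. g xs x)" for xs
  have g_nn: "0 \<le> g xs x" for xs x unfolding g_def by simp
  have pw: "(M0 \<alpha> n P xs)\<^sup>2 \<le> G xs" for xs
    unfolding M0_def G_def g_def by (rule pointwise) (use assms in auto)
  have g_sum: "g xs summable_on UNIV" for xs
  proof (rule summ_bound[where c=1 and P=P])
    fix x
    show "0 \<le> g xs x" by (rule g_nn)
    have "pmf P x powr (2*\<alpha>-1) \<le> pmf P x"
      using assms by (intro powr_le_self) (auto simp: pmf_le_1)
    thus "g xs x \<le> 1 * pmf P x" unfolding g_def by auto
  qed
  have g_abs: "Infinite_Set_Sum.abs_summable_on (g xs) UNIV" for xs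
  proof -
    have "Infinite_Sum.abs_summable_on (g xs) UNIV"
      using g_sum[of xs] g_nn by (simp add: abs_of_nonneg)
    thus ?thesis using abs_summable_equivalent by blast
  qed
  have G_nn: "ennreal (G xs) = (\<integral>\<^sup>+ x. ennreal (g xs x) \<partial>C)" for xs
    unfolding C_def G_def
    by (simp add: nn_integral_conv_infsetsum[OF g_abs g_nn] infsetsum_infsum[OF g_abs])
  interpret pair_sigma_finite C S
    unfolding C_def S_def
    by (intro pair_sigma_finite.intro sigma_finite_measure_count_space_countable)
       (auto intro: prob_space_imp_sigma_finite prob_space_measure_pmf)
  have meas: "case_prod (\<lambda>x xs. ennreal (g xs x)) \<in> borel_measurable (C \<Otimes>\<^sub>M S)"
  proof -
    have "(\<lambda>z. ennreal (g (snd z) i)) \<in> borel_measurable (C \<Otimes>\<^sub>M S)" for i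
    proof -
      have "(\<lambda>xs. ennreal (g xs i)) \<in> borel_measurable S" unfolding S_def by simp
      thus ?thesis by (rule measurable_compose[OF measurable_snd])
    qed
    hence "(\<lambda>z. ennreal (g (snd z) (fst z))) \<in> borel_measurable (C \<Otimes>\<^sub>M S)"
      by (rule measurable_compose_countable) (simp add: C_def measurable_fst'')
    thus ?thesis by (simp add: case_prod_beta')
  qed
  have "(\<integral>\<^sup>+ xs. ennreal ((M0 \<alpha> n P xs)\<^sup>2) \<partial>S) \<le> (\<integral>\<^sup>+ xs. ennreal (G xs) \<partial>S)"
    using pw by (intro nn_integral_mono) (simp add: ennreal_leI)
  also have "\<dots> = (\<integral>\<^sup>+ xs. (\<integral>\<^sup>+ x. ennreal (g xs x) \<partial>C) \<partial>S)"
    by (simp add: G_nn)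
  also have "\<dots> = (\<integral>\<^sup>+ x. (\<integral>\<^sup>+ xs. ennreal (g xs x) \<partial>S) \<partial>C)"
    by (rule Fubini'[OF meas])
  also have "\<dots> = (\<integral>\<^sup>+ x. ennreal (pmf P x powr (2*\<alpha>-1) * (1 - pmf P x) ^ n) \<partial>C)"
    unfolding g_def S_def by (simp add: inner_int)
  also have "\<dots> \<le> (\<integral>\<^sup>+ x. ennreal K * ennreal (pmf P x) \<partial>C)"
  proof (intro nn_integral_mono)
    fix x
    have p: "0 \<le> pmf P x" "pmf P x \<le> 1" by (auto simp: pmf_le_1)
    have e: "2*\<alpha>-1 = \<gamma> + 1" unfolding \<gamma>_def by simp
    have "pmf P x powr (2*\<alpha>-1) * (1 - pmf P x) ^ n = pmf P x * (pmf P x powr \<gamma> * (1 - pmf P x) ^ n)"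
      unfolding e using powr_split[OF p(1) g0] by simp
    also have "\<dots> \<le> pmf P x * K"
      unfolding K_def using p g0 n1 by (intro mult_left_mono key2) auto
    finally show "ennreal (pmf P x powr (2*\<alpha>-1) * (1 - pmf P x) ^ n) \<le> ennreal K * ennreal (pmf P x)"
      by (simp add: ennreal_mult[symmetric] K0 mult.commute ennreal_leI)
  qed
  also have "\<dots> = ennreal K * (\<integral>\<^sup>+ x. ennreal (pmf P x) \<partial>C)"
    by (rule nn_integral_cmult) (simp add: C_def)
  also have "\<dots> = ennreal K"
    unfolding C_def using nn_integral_pmf[of UNIV P] by (simp add: measure_pmf.emeasure_space_1)
  finally have I: "(\<integral>\<^sup>+ xs. ennreal ((M0 \<alpha> n P xs)\<^sup>2) \<partial>S) \<le> ennreal K" .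
  have "measure_pmf.expectation (iid_samples n P) (\<lambda>xs. (M0 \<alpha> n P xs)\<^sup>2)
     = enn2real (\<integral>\<^sup>+ xs. ennreal ((M0 \<alpha> n P xs)\<^sup>2) \<partial>S)"
    unfolding S_def by (rule integral_eq_nn_integral) auto
  also have "\<dots> \<le> enn2real (ennreal K)"
    by (rule enn2real_mono[OF I]) simp
  also have "\<dots> = K" using K0 by simp
  finally show "measure_pmf.expectation (iid_samples n P) (\<lambda>xs. (M0 \<alpha> n P xs)\<^sup>2)
             \<le> \<gamma> powr \<gamma> / real n powr (2 * (\<alpha> - 1))"
    unfolding K_def \<gamma>_def .
qed

end
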